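(* For every $b\in\mathbb R$, $$\lim_{z\to\infty}e^{-z}z^{b+1}\sum_{k=1}^\infty\frac{z^{k-1}}{k!\,k^b}=1.$$ Moreover, if $b\ge-1$, then $$\sup_{z\ge0}\ e^{-z}z^{b+1}\sum_{k=1}^\infty\frac{z^{k-1}}{k!\,k^b}<\infty.$$ *)

theory Defs
  imports "HOL-Analysis.Analysis"
begin

definition F :: "real \<Rightarrow> real \<Rightarrow> real" where
  "F b z = exp (- z) * z powr (b + 1) *
     (\<Sum>n. z ^ n / (fact (Suc n) * real (Suc n) powr b))"

end

theory Submission
  imports Defs
begin

definition q :: "real \<Rightarrow> nat \<Rightarrow> real" where
  "q z n = z ^ Suc n / fact (Suc n)"

lemma bern:
  fixes y t :: real
  assumes "0 \<le> t" "t \<le> 1" "y > 0"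
  shows "y powr t \<le> 1 + t * (y - 1)"
  using Youngs_inequality_0[of t "1 - t" y 1] assms by (simp add: algebra_simps)

lemma powr_ge_ln:
  fixes y b :: real
  assumes "y > 0"
  shows "1 + b * ln y \<le> y powr b"
  using assms exp_ge_add_one_self[of "b * ln y"] by (simp add: powr_def mult.commute)

lemma q_sums: "q z sums (exp z - 1)"
proof -
  have "(\<lambda>n. z ^ n /\<^sub>R fact n) sums exp z" by (rule exp_converges)
  hence "(\<lambda>n. z ^ n / fact n) sums exp z" by (simp add: divide_inverse_commute scaleR_conv_of_real)
  hence "(\<lambda>n. z ^ Suc n / fact (Suc n)) sums (exp z - z ^ 0 / fact 0)"
    by (subst sums_Suc_iff) simp
  thus ?thesis by (simp add: q_def[abs_def])
qed

lemma q1_sums: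
  assumes "z > 0"
  shows "(\<lambda>n. q z n * (real (Suc n) / z)) sums exp z"
proof -
  have "(\<lambda>n. z ^ n /\<^sub>R fact n) sums exp z" by (rule exp_converges)
  hence "(\<lambda>n. z ^ n / fact n) sums exp z" by (simp add: divide_inverse_commute scaleR_conv_of_real)
  moreover have "q z n * (real (Suc n) / z) = z ^ n / fact n" for n
  proof -
    have "q z n * (real (Suc n) / z) = (z * z ^ n) / (real (Suc n) * fact n) * (real (Suc n) / z)"
      by (simp add: q_def fact_Suc del: of_nat_Suc)
    also have "\<dots> = z ^ n / fact n" using assms by (simp del: of_nat_Suc)
    finally show ?thesis .
  qed
  ultimately show ?thesis by simp
qed

lemma q_nonneg: "z \<ge> 0 \<Longrightarrow> q z n \<ge> 0"
  by (simp add: q_def)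

definition w :: "real \<Rightarrow> real \<Rightarrow> nat \<Rightarrow> real" where
  "w b z n = q z n * (z / real (Suc n)) powr b"

lemma pow2_powr: "((2::real) ^ k) powr c = (2 powr c) ^ k"
proof -
  have "((2::real) ^ k) powr c = (2 powr real k) powr c" by (simp add: powr_realpow)
  also have "\<dots> = (2 powr c) powr real k" by (simp add: powr_powr mult.commute)
  also have "\<dots> = (2 powr c) ^ k" by (simp add: powr_realpow)
  finally show ?thesis .
qed

lemma w_nonneg: "z > 0 \<Longrightarrow> w b z n \<ge> 0"
  by (simp add: w_def q_def)

lemma w_summable:
  assumes "z > 0"
  shows "summable (w b z)"
proof (rule summable_comparison_test)
  define B where "B = (2::real) powr \<bar>b\<bar>"
  have Bpos: "B > 0" by (simp add: B_def)
  show "summable (\<lambda>n. z powr b * q (B * z) n)"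
    using q_sums[of "B*z"] by (intro summable_mult) (auto simp: sums_iff)
  show "\<exists>N. \<forall>n\<ge>N. norm (w b z n) \<le> z powr b * q (B * z) n"
  proof (intro exI allI impI)
    fix n :: nat
    have "(z / real (Suc n)) powr b = z powr b * real (Suc n) powr (- b)"
      by (simp add: powr_divide divide_powr_uminus)
    also have "real (Suc n) powr (- b) \<le> real (Suc n) powr \<bar>b\<bar>"
      by (intro powr_mono) auto
    also have "\<dots> \<le> (2 ^ Suc n) powr \<bar>b\<bar>"
    proof (rule powr_mono2)
      show "real (Suc n) \<le> 2 ^ Suc n"
        using less_exp[of "Suc n"] by (metis of_nat_le_iff of_nat_numeral of_nat_power less_imp_le)
    qed auto
    also have "\<dots> = B ^ Suc n" unfolding B_def by (rule pow2_powr)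
    finally have "(z / real (Suc n)) powr b \<le> z powr b * B ^ Suc n"
      using assms by (simp add: mult_left_mono)
    hence "w b z n \<le> q z n * (z powr b * B ^ Suc n)"
      unfolding w_def using q_nonneg[of z n] assms by (intro mult_left_mono) auto
    also have "\<dots> = z powr b * q (B * z) n"
      by (simp add: q_def power_mult_distrib)
    finally show "norm (w b z n) \<le> z powr b * q (B * z) n"
      using w_nonneg[OF assms, of b n] by simp
  qed
qed

lemma F_rep:
  assumes "z > 0"
  shows "F b z = exp (- z) * suminf (w b z)"
proof -
  define g where "g n = z ^ n / (fact (Suc n) * real (Suc n) powr b)" for n
  have eq: "w b z n = z powr (b + 1) * g n" for n
  proof -
    have "z powr (b + 1) = z * z powr b" using assms by (simp add: powr_add)
    thus ?thesis using assms
      by (simp add: w_def q_def g_def powr_divide field_simps)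
  qed
  have "summable g"
  proof -
    have "summable (\<lambda>n. w b z n / z powr (b + 1))"
      by (intro summable_divide w_summable assms)
    moreover have "w b z n / z powr (b + 1) = g n" for n using eq assms by simp
    ultimately show ?thesis by simp
  qed
  hence "suminf (w b z) = z powr (b + 1) * suminf g"
    by (subst suminf_mult[symmetric]) (simp_all add: eq[symmetric] w_def[symmetric])
  thus ?thesis by (simp add: F_def g_def[abs_def])
qed

lemma ln_ge_one_minus_inv: "y > 0 \<Longrightarrow> 1 - 1 / y \<le> ln (y::real)"
  using ln_le_minus_one[of "1/y"] by (simp add: ln_div)

lemma lower_pos:
  assumes "z > 0" "b \<ge> 0"
  shows "1 - (1 + b) * exp (- z) \<le> F b z"
proof -
  define l where "l n = (1 + b) * q z n - b * (q z n * (real (Suc n) / z))" for n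
  have ls: "l sums ((1 + b) * (exp z - 1) - b * exp z)"
    unfolding l_def[abs_def] by (intro sums_diff sums_mult q_sums q1_sums assms)
  have "l n \<le> w b z n" for n
  proof -
    define y where "y = z / real (Suc n)"
    have y: "y > 0" using assms by (simp add: y_def)
    have "1 + b * (1 - 1 / y) \<le> 1 + b * ln y"
      using ln_ge_one_minus_inv[OF y] assms by (simp add: mult_left_mono)
    also have "\<dots> \<le> y powr b" by (rule powr_ge_ln[OF y])
    finally have "q z n * (1 + b * (1 - 1 / y)) \<le> q z n * y powr b"
      using q_nonneg[of z n] assms by (intro mult_left_mono) auto
    moreover have "1 / y = real (Suc n) / z" by (simp add: y_def)
    ultimately show ?thesis by (simp add: l_def w_def y_def algebra_simps)
  qed
  hence "suminf l \<le> suminf (w b z)"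
    using ls w_summable[OF assms(1)] by (intro suminf_le) (auto simp: sums_iff)
  hence "exp (- z) * suminf l \<le> exp (- z) * suminf (w b z)" by simp
  moreover have "exp (- z) * suminf l = 1 - (1 + b) * exp (- z)"
  proof -
    have L: "suminf l = exp z - (1 + b)" using sums_unique[OF ls] by (simp add: algebra_simps)
    have "exp (- z) * suminf l = exp (- z) * exp z - (1 + b) * exp (- z)"
      unfolding L by (simp add: algebra_simps)
    also have "exp (- z) * exp z = 1" by (simp add: mult_exp_exp)
    finally show ?thesis .
  qed
  ultimately show ?thesis using F_rep[OF assms(1)] by simp
qed

lemma lower_neg:
  assumes "z > 0" "b < 0"
  shows "(1 - b) * (1 - exp (- z)) + b * F 1 z \<le> F b z"
proof -
  define l where "l n = (1 - b) * q z n + b * w 1 z n" for n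
  have ls: "l sums ((1 - b) * (exp z - 1) + b * suminf (w 1 z))"
    unfolding l_def[abs_def]
    by (intro sums_add sums_mult q_sums summable_sums w_summable assms)
  have "l n \<le> w b z n" for n
  proof -
    define y where "y = z / real (Suc n)"
    have y: "y > 0" using assms by (simp add: y_def)
    have "1 + b * (y - 1) \<le> 1 + b * ln y"
      using ln_le_minus_one[OF y] assms by (simp add: mult_left_mono_neg)
    also have "\<dots> \<le> y powr b" by (rule powr_ge_ln[OF y])
    finally have "q z n * (1 + b * (y - 1)) \<le> q z n * y powr b"
      using q_nonneg[of z n] assms by (intro mult_left_mono) auto
    moreover have "w 1 z n = q z n * y powr 1" by (simp only: w_def y_def)
    moreover have "y powr 1 = y" using y by simp
    ultimately show ?thesis by (simp add: l_def w_def y_def algebra_simps)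
  qed
  hence "suminf l \<le> suminf (w b z)"
    using ls w_summable[OF assms(1)] by (intro suminf_le) (auto simp: sums_iff)
  hence "exp (- z) * suminf l \<le> exp (- z) * suminf (w b z)" by simp
  moreover have "exp (- z) * suminf l = (1 - b) * (1 - exp (- z)) + b * F 1 z"
  proof -
    have "exp (- z) * suminf l = (1 - b) * (exp (- z) * exp z - exp (- z)) + b * (exp (- z) * suminf (w 1 z))"
      unfolding sums_unique[OF ls, symmetric] by (simp add: algebra_simps)
    also have "exp (- z) * exp z = 1" by (simp add: mult_exp_exp)
    finally show ?thesis using F_rep[OF assms(1), of 1] by simp
  qed
  ultimately show ?thesis using F_rep[OF assms(1)] by simp
qed

lemma fact_le_nat: "fact (m + j) \<le> (fact m :: nat) * (m + j) ^ j"
proof (induction j)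
  case 0 thus ?case by simp
next
  case (Suc j)
  have "fact (m + Suc j) = (m + Suc j) * (fact (m + j) :: nat)" by simp
  also have "\<dots> \<le> (m + Suc j) * (fact m * (m + j) ^ j)"
    using Suc.IH by (intro mult_left_mono) auto
  also have "\<dots> \<le> (m + Suc j) * (fact m * (m + Suc j) ^ j)"
    by (intro mult_left_mono power_mono) auto
  also have "\<dots> = fact m * (m + Suc j) ^ Suc j" by (simp add: algebra_simps)
  finally show ?case .
qed

lemma fact_le_real: "(fact (m + j) :: real) \<le> fact m * real (m + j) ^ j"
proof -
  have "real (fact (m + j)) \<le> real (fact m * (m + j) ^ j)"
    using fact_le_nat by (rule of_nat_mono)
  thus ?thesis by (simp only: of_nat_fact of_nat_mult of_nat_power)
qed

lemma exp_sums_real: "(\<lambda>n. z ^ n / fact n) sums exp (z::real)"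
  using exp_converges[of z] by (simp add: divide_inverse_commute scaleR_conv_of_real)

lemma powr_split:
  fixes y a :: real
  assumes "y > 0" "j > 0"
  shows "y powr a = (y ^ j) powr (a / real j)"
proof -
  have "(y ^ j) powr (a / real j) = (y powr real j) powr (a / real j)"
    using assms by (simp add: powr_realpow)
  also have "\<dots> = y powr a" using assms by (simp add: powr_powr)
  finally show ?thesis by simp
qed

lemma upper_pos:
  assumes z: "z > 0" and b: "b \<ge> 0" and j: "j \<ge> 1" "b \<le> real j"
  shows "F b z \<le> exp (- z) * z powr b * (\<Sum>n<L. q z n) + (1 + real j / real (Suc L)) powr b"
proof -
  define t where "t = b / real j"
  define C where "C = (1 + real j / real (Suc L)) powr b"
  define r where "r n = z ^ (n + Suc j) / fact (n + Suc j)" for n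
  define R where "R = exp z - (\<Sum>i<Suc j. z ^ i / fact i)"
  have t: "0 \<le> t" "t \<le> 1" using b j by (auto simp: t_def)
  have C: "C \<ge> 0" by (simp add: C_def)
  have rs: "r sums R"
    unfolding r_def R_def using exp_sums_real[of z]
    by (subst sums_iff_shift[where f = "\<lambda>n. z ^ n / fact n"]) simp
  have "0 \<le> (\<Sum>i<Suc j. z ^ i / fact i)" using z by (intro sum_nonneg) auto
  hence R: "R \<le> exp z" unfolding R_def by linarith
  have r0: "r n \<ge> 0" for n using z by (simp add: r_def)
  define u where "u n = (if n \<in> {..<L} then z powr b * q z n else 0) + C * ((1 - t) * q z n + t * r n)" for n
  have us: "u sums ((\<Sum>n<L. z powr b * q z n) + C * ((1 - t) * (exp z - 1) + t * R))"
    unfolding u_def[abs_def]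
    by (intro sums_add sums_If_finite_set sums_mult q_sums rs) auto
  have wu: "w b z n \<le> u n" for n
  proof (cases "n < L")
    case True
    have "(z / real (Suc n)) powr b \<le> z powr b"
      using z b by (intro powr_mono2) (auto simp: divide_le_eq)
    hence "w b z n \<le> z powr b * q z n"
      unfolding w_def using q_nonneg[of z n] z by (simp add: mult_left_mono mult.commute)
    moreover have "0 \<le> C * ((1 - t) * q z n + t * r n)"
      using C t q_nonneg[of z n] r0[of n] z by (intro mult_nonneg_nonneg add_nonneg_nonneg) auto
    ultimately show ?thesis using True by (simp add: u_def)
  next
    case False
    define y where "y = z / real (Suc n + j)"
    have y: "y > 0" using z by (simp add: y_def)
    have split: "z / real (Suc n) = y * (real (Suc n + j) / real (Suc n))"
      by (simp add: y_def)
    have "real (Suc n + j) / real (Suc n) = 1 + real j / real (Suc n)"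
      by (simp add: field_simps)
    also have "\<dots> \<le> 1 + real j / real (Suc L)"
      using False by (intro add_left_mono divide_left_mono) auto
    finally have rat: "(real (Suc n + j) / real (Suc n)) powr b \<le> C"
      unfolding C_def using b by (intro powr_mono2) auto
    have yb: "y powr b \<le> 1 + t * (y ^ j - 1)"
      using powr_split[OF y, of j b] bern[OF t, of "y ^ j"] y j by (simp add: t_def)
    have qy: "q z n * y ^ j \<le> r n"
    proof -
      have "q z n * y ^ j = z ^ (n + Suc j) / (fact (Suc n) * real (Suc n + j) ^ j)"
        by (simp add: q_def y_def power_divide power_add)
      also have "\<dots> \<le> z ^ (n + Suc j) / fact (Suc n + j)"
        using z fact_le_real[of "Suc n" j] by (intro divide_left_mono) auto
      also have "\<dots> = r n" by (simp add: r_def)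
      finally show ?thesis .
    qed
    have "w b z n = q z n * y powr b * (real (Suc n + j) / real (Suc n)) powr b"
      unfolding w_def split using y by (simp only: powr_mult mult.assoc)
    also have "\<dots> \<le> q z n * y powr b * C"
      using rat q_nonneg[of z n] z by (intro mult_left_mono) auto
    also have "\<dots> \<le> q z n * (1 + t * (y ^ j - 1)) * C"
      using yb q_nonneg[of z n] z C by (intro mult_right_mono mult_left_mono) auto
    also have "\<dots> = C * ((1 - t) * q z n + t * (q z n * y ^ j))"
      by (simp add: algebra_simps)
    also have "\<dots> \<le> C * ((1 - t) * q z n + t * r n)"
      using qy t C by (intro mult_left_mono add_left_mono) auto
    finally show ?thesis using False by (simp add: u_def)
  qed
  have "suminf (w b z) \<le> suminf u"
    using wu w_summable[OF z] us by (intro suminf_le) (auto simp: sums_iff)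
  also have "\<dots> = z powr b * (\<Sum>n<L. q z n) + C * ((1 - t) * (exp z - 1) + t * R)"
    using sums_unique[OF us] by (simp add: sum_distrib_left)
  also have "\<dots> \<le> z powr b * (\<Sum>n<L. q z n) + C * exp z"
  proof -
    have "(1 - t) * (exp z - 1) + t * R \<le> (1 - t) * exp z + t * exp z"
      using t R by (intro add_mono mult_left_mono) auto
    also have "\<dots> = exp z" by (simp add: algebra_simps)
    finally have "C * ((1 - t) * (exp z - 1) + t * R) \<le> C * exp z"
      using C by (intro mult_left_mono) auto
    thus ?thesis by simp
  qed
  finally have "exp (- z) * suminf (w b z) \<le> exp (- z) * (z powr b * (\<Sum>n<L. q z n) + C * exp z)"
    by simp
  also have "\<dots> = exp (- z) * z powr b * (\<Sum>n<L. q z n) + C * (exp (- z) * exp z)"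
    by (simp add: algebra_simps)
  also have "exp (- z) * exp z = 1" by (simp add: mult_exp_exp)
  finally show ?thesis using F_rep[OF z] by (simp add: C_def)
qed

lemma moment:
  fixes z :: real
  assumes z: "z \<ge> 0"
  shows "\<forall>c\<ge>0. \<exists>s. (\<lambda>k. z ^ k / fact k * (real k + c) ^ j) sums s \<and> s \<le> exp z * (z + c + real j) ^ j"
proof (induction j)
  case 0
  show ?case using exp_sums_real[of z] by auto
next
  case (Suc j)
  show ?case
  proof (intro allI impI)
    fix c :: real assume c: "c \<ge> 0"
    obtain s1 where s1: "(\<lambda>k. z ^ k / fact k * (real k + (c + 1)) ^ j) sums s1"
      "s1 \<le> exp z * (z + (c + 1) + real j) ^ j"
      using Suc.IH c by (meson add_nonneg_nonneg zero_le_one)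
    obtain s0 where s0: "(\<lambda>k. z ^ k / fact k * (real k + c) ^ j) sums s0"
      "s0 \<le> exp z * (z + c + real j) ^ j"
      using Suc.IH c by blast
    define g where "g k = z ^ k / fact k * real k * (real k + c) ^ j" for k
    have "(\<lambda>m. g (Suc m)) sums (z * s1)"
    proof -
      have "g (Suc m) = z * (z ^ m / fact m * (real m + (c + 1)) ^ j)" for m
        by (simp add: g_def fact_Suc algebra_simps del: of_nat_Suc) (simp add: field_simps)
      thus ?thesis using sums_mult[OF s1(1), of z] by simp
    qed
    hence gs: "g sums (z * s1)" by (subst (asm) sums_Suc_iff) (simp add: g_def)
    have "(\<lambda>k. g k + c * (z ^ k / fact k * (real k + c) ^ j)) sums (z * s1 + c * s0)"
      by (intro sums_add gs sums_mult s0(1))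
    moreover have "g k + c * (z ^ k / fact k * (real k + c) ^ j) = z ^ k / fact k * (real k + c) ^ Suc j" for k
      by (simp add: g_def algebra_simps)
    ultimately have S: "(\<lambda>k. z ^ k / fact k * (real k + c) ^ Suc j) sums (z * s1 + c * s0)" by simp
    define M where "M = z + c + real (Suc j)"
    have M1: "z + (c + 1) + real j = M" by (simp add: M_def)
    have M0: "(z + c + real j) ^ j \<le> M ^ j"
      using z c by (intro power_mono) (auto simp: M_def)
    have "z * s1 + c * s0 \<le> z * (exp z * M ^ j) + c * (exp z * M ^ j)"
    proof (intro add_mono mult_left_mono)
      show "s1 \<le> exp z * M ^ j" using s1(2) M1 by simp
      show "s0 \<le> exp z * M ^ j" using s0(2) M0 by (meson exp_ge_zero mult_left_mono order_trans)
    qed (use z c in auto)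
    also have "\<dots> = exp z * ((z + c) * M ^ j)" by (simp add: algebra_simps)
    also have "\<dots> \<le> exp z * (M * M ^ j)"
      using z c by (intro mult_left_mono mult_right_mono) (auto simp: M_def)
    finally have "z * s1 + c * s0 \<le> exp z * (z + c + real (Suc j)) ^ Suc j" by (simp add: M_def)
    with S show "\<exists>s. (\<lambda>k. z ^ k / fact k * (real k + c) ^ Suc j) sums s \<and>
      s \<le> exp z * (z + c + real (Suc j)) ^ Suc j" by blast
  qed
qed

lemma moment_q:
  assumes z: "z > 0" and j: "j \<ge> 1"
  shows "\<exists>s. (\<lambda>n. q z n * real (Suc n) ^ j) sums s \<and> s \<le> exp z * (z + real j) ^ j"
proof -
  obtain s where s: "(\<lambda>k. z ^ k / fact k * (real k + 0) ^ j) sums s" "s \<le> exp z * (z + 0 + real j) ^ j"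
    using moment[of z j] z by fastforce
  have "(\<lambda>n. z ^ Suc n / fact (Suc n) * (real (Suc n) + 0) ^ j) sums s"
    using s(1) j by (subst sums_Suc_iff) (simp add: zero_power)
  hence "(\<lambda>n. q z n * real (Suc n) ^ j) sums s" by (simp add: q_def)
  with s(2) show ?thesis by auto
qed

lemma powr_flip:
  fixes z s b :: real
  assumes "z > 0" "s > 0"
  shows "(z / s) powr b = (s / z) powr (- b)"
proof -
  have "(s / z) powr (- b) = 1 / (s / z) powr b" by (simp add: powr_minus_divide)
  also have "\<dots> = 1 / (s powr b / z powr b)" by (simp only: powr_divide)
  also have "\<dots> = z powr b / s powr b" by simp
  also have "\<dots> = (z / s) powr b" by (simp only: powr_divide)
  finally show ?thesis by simp
qed

lemma upper_neg:
  assumes z: "z > 0" and b: "b < 0" and j: "j \<ge> 1" "- b \<le> real j"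
  shows "F b z \<le> (1 + b / real j) + (- b / real j) * (1 + real j / z) ^ j"
proof -
  define t where "t = - b / real j"
  have t: "0 \<le> t" "t \<le> 1" using b j by (auto simp: t_def divide_le_eq le_divide_eq)
  obtain s where s: "(\<lambda>n. q z n * real (Suc n) ^ j) sums s" "s \<le> exp z * (z + real j) ^ j"
    using moment_q[OF z j(1)] by blast
  define u where "u n = (1 - t) * q z n + (t / z ^ j) * (q z n * real (Suc n) ^ j)" for n
  have us: "u sums ((1 - t) * (exp z - 1) + (t / z ^ j) * s)"
    unfolding u_def[abs_def] by (intro sums_add sums_mult q_sums s(1))
  have wu: "w b z n \<le> u n" for n
  proof -
    define y where "y = real (Suc n) / z"
    have y: "y > 0" using z by (simp add: y_def)
    have "(z / real (Suc n)) powr b = y powr (- b)"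
      unfolding y_def using z by (intro powr_flip) auto
    also have "\<dots> = (y ^ j) powr t" using powr_split[OF y, of j "- b"] j by (simp add: t_def)
    also have "\<dots> \<le> 1 + t * (y ^ j - 1)" using bern[OF t, of "y ^ j"] y by simp
    finally have "w b z n \<le> q z n * (1 + t * (y ^ j - 1))"
      unfolding w_def using q_nonneg[of z n] z by (intro mult_left_mono) auto
    also have "\<dots> = u n" by (simp add: u_def y_def power_divide algebra_simps)
    finally show ?thesis .
  qed
  have "suminf (w b z) \<le> suminf u"
    using wu w_summable[OF z] us by (intro suminf_le) (auto simp: sums_iff)
  hence "exp (- z) * suminf (w b z) \<le> exp (- z) * ((1 - t) * (exp z - 1) + (t / z ^ j) * s)"
    using sums_unique[OF us] by simp
  also have "\<dots> = (1 - t) * (exp (- z) * exp z - exp (- z)) + (t / z ^ j) * (exp (- z) * s)"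
    by (simp add: algebra_simps)
  also have "exp (- z) * exp z = 1" by (simp add: mult_exp_exp)
  also have "(1 - t) * (1 - exp (- z)) + (t / z ^ j) * (exp (- z) * s)
      \<le> (1 - t) * 1 + (t / z ^ j) * (z + real j) ^ j"
  proof (intro add_mono mult_left_mono)
    have "exp (- z) * s \<le> exp (- z) * (exp z * (z + real j) ^ j)"
      using s(2) by simp
    also have "\<dots> = (exp (- z) * exp z) * (z + real j) ^ j" by simp
    finally show "exp (- z) * s \<le> (z + real j) ^ j" by (simp add: mult_exp_exp)
  qed (use t z in auto)
  also have "(t / z ^ j) * (z + real j) ^ j = t * (1 + real j / z) ^ j"
  proof -
    have "1 + real j / z = (z + real j) / z" using z by (simp add: field_simps)
    thus ?thesis by (simp add: power_divide)
  qed
  finally show ?thesis using F_rep[OF z] by (simp add: t_def)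
qed

lemma bounded_neg:
  assumes z: "z > 0" and b: "b < 0" "b \<ge> -1"
  shows "F b z \<le> 1"
proof -
  define a where "a = - b"
  have a: "0 \<le> a" "a \<le> 1" using b by (auto simp: a_def)
  define u where "u n = (1 - a) * q z n + a * (q z n * (real (Suc n) / z))" for n
  have us: "u sums ((1 - a) * (exp z - 1) + a * exp z)"
    unfolding u_def[abs_def] by (intro sums_add sums_mult q_sums q1_sums z)
  have wu: "w b z n \<le> u n" for n
  proof -
    define y where "y = real (Suc n) / z"
    have y: "y > 0" using z by (simp add: y_def)
    have "(z / real (Suc n)) powr b = y powr a"
      unfolding y_def a_def using z by (intro powr_flip) auto
    also have "\<dots> \<le> 1 + a * (y - 1)" using bern[OF a y] .
    finally have "w b z n \<le> q z n * (1 + a * (y - 1))"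
      unfolding w_def using q_nonneg[of z n] z by (intro mult_left_mono) auto
    also have "\<dots> = u n" by (simp add: u_def y_def algebra_simps)
    finally show ?thesis .
  qed
  have "suminf (w b z) \<le> suminf u"
    using wu w_summable[OF z] us by (intro suminf_le) (auto simp: sums_iff)
  also have "\<dots> \<le> exp z"
    using sums_unique[OF us] a by (simp add: algebra_simps)
  finally have "exp (- z) * suminf (w b z) \<le> exp (- z) * exp z" by simp
  thus ?thesis using F_rep[OF z] by (simp add: mult_exp_exp)
qed

lemma q_le_exp:
  fixes z :: real
  assumes "z \<ge> 0"
  shows "q z k \<le> exp z"
proof -
  have "sum (q z) {k} \<le> suminf (q z)"
    using q_sums[of z] assms by (intro sum_le_suminf) (auto simp: sums_iff q_nonneg)
  thus ?thesis using sums_unique[OF q_sums[of z]] by simp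
qed

lemma exp_pow_bound:
  fixes z :: real
  assumes z: "z > 0"
  shows "exp (- z) * z ^ k \<le> fact (Suc k) / z"
proof -
  have "exp (- z) * q z k \<le> exp (- z) * exp z"
    using q_le_exp[of z k] z by simp
  hence "exp (- z) * (z ^ Suc k / fact (Suc k)) \<le> 1" by (simp add: q_def mult_exp_exp)
  hence "(exp (- z) * (z ^ Suc k / fact (Suc k))) * fact (Suc k) \<le> 1 * fact (Suc k)"
    by (intro mult_right_mono) auto
  hence "exp (- z) * z ^ Suc k \<le> fact (Suc k)" by simp
  hence "z * (exp (- z) * z ^ k) \<le> fact (Suc k)" by (simp add: algebra_simps)
  thus ?thesis using z by (simp add: field_simps)
qed

lemma exp_pow_lim: "((\<lambda>z::real. exp (- z) * z ^ k) \<longlongrightarrow> 0) at_top"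
proof (rule tendsto_sandwich)
  show "\<forall>\<^sub>F z in at_top. 0 \<le> exp (- z) * (z::real) ^ k"
    using eventually_gt_at_top[of 0] by eventually_elim simp
  show "\<forall>\<^sub>F z in at_top. exp (- z) * (z::real) ^ k \<le> fact (Suc k) / z"
    using eventually_gt_at_top[of 0] by eventually_elim (rule exp_pow_bound)
  show "((\<lambda>z::real. fact (Suc k) / z) \<longlongrightarrow> 0) at_top"
    by (intro tendsto_divide_0[OF tendsto_const] filterlim_at_top_imp_at_infinity[OF filterlim_ident])
qed simp

lemma tail_term_lim:
  assumes b: "b \<ge> 0"
  shows "((\<lambda>z. exp (- z) * z powr b * q z n) \<longlongrightarrow> 0) at_top"
proof (rule tendsto_sandwich)
  define m where "m = nat \<lceil>b\<rceil>"
  show "\<forall>\<^sub>F z in at_top. 0 \<le> exp (- z) * z powr b * q z n"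
    using eventually_gt_at_top[of 0] by eventually_elim (simp add: q_nonneg)
  show "\<forall>\<^sub>F z in at_top. exp (- z) * z powr b * q z n \<le> exp (- z) * z ^ (m + Suc n)"
    using eventually_ge_at_top[of 1]
  proof eventually_elim
    case (elim z)
    have bm: "b \<le> real m" unfolding m_def using b le_of_int_ceiling[of b] by linarith
    have "z powr b \<le> z powr real m"
      using elim bm by (intro powr_mono) auto
    also have "\<dots> = z ^ m" using elim by (simp add: powr_realpow)
    finally have zb: "z powr b \<le> z ^ m" .
    have f1: "1 \<le> (fact (Suc n) :: real)" by (rule fact_ge_1)
    have "z ^ Suc n / fact (Suc n) \<le> z ^ Suc n / 1"
      using f1 elim by (intro divide_left_mono) auto
    hence qn: "q z n \<le> z ^ Suc n" by (simp add: q_def)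
    have "exp (- z) * z powr b * q z n \<le> exp (- z) * z ^ m * z ^ Suc n"
      using zb qn elim by (intro mult_mono mult_left_mono) (auto simp: q_nonneg)
    thus ?case by (simp add: power_add mult.assoc mult.left_commute)
  qed
  show "((\<lambda>z::real. exp (- z) * z ^ (m + Suc n)) \<longlongrightarrow> 0) at_top" by (rule exp_pow_lim)
qed simp

lemma lim_pos:
  assumes b: "b \<ge> 0"
  shows "(F b \<longlongrightarrow> 1) at_top"
  unfolding tendsto_iff
proof (intro allI impI)
  fix e :: real assume e: "e > 0"
  define j where "j = Suc (nat \<lceil>b\<rceil>)"
  have j: "j \<ge> 1" "b \<le> real j" unfolding j_def by auto linarith
  have "(\<lambda>L. (1 + real j / real (Suc L)) powr b) \<longlonglongrightarrow> (1 + 0) powr b"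
    by (intro tendsto_powr tendsto_add tendsto_const LIMSEQ_Suc[OF lim_const_over_n]) auto
  hence "\<forall>\<^sub>F L in sequentially. (1 + real j / real (Suc L)) powr b < 1 + e / 2"
    using e by (intro order_tendstoD) auto
  then obtain L where L: "(1 + real j / real (Suc L)) powr b < 1 + e / 2"
    unfolding eventually_sequentially by blast
  have "((\<lambda>z. \<Sum>n<L. exp (- z) * z powr b * q z n) \<longlongrightarrow> (\<Sum>n<L. 0)) at_top"
    by (intro tendsto_sum tail_term_lim b)
  hence T: "\<forall>\<^sub>F z in at_top. (\<Sum>n<L. exp (- z) * z powr b * q z n) < e / 2"
    using e by (intro order_tendstoD) auto
  have "((\<lambda>z. 1 - (1 + b) * exp (- z)) \<longlongrightarrow> 1 - (1 + b) * 0) at_top"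
    by (intro tendsto_intros filterlim_compose[OF exp_at_bot] filterlim_uminus_at_bot_at_top)
  hence Lo: "\<forall>\<^sub>F z in at_top. 1 - e < 1 - (1 + b) * exp (- z)"
    using e by (intro order_tendstoD) auto
  show "\<forall>\<^sub>F z in at_top. dist (F b z) 1 < e"
    using T Lo eventually_gt_at_top[of 0]
  proof eventually_elim
    case (elim z)
    have up: "F b z \<le> exp (- z) * z powr b * (\<Sum>n<L. q z n) + (1 + real j / real (Suc L)) powr b"
      using upper_pos[OF elim(3) b j] .
    have "exp (- z) * z powr b * (\<Sum>n<L. q z n) = (\<Sum>n<L. exp (- z) * z powr b * q z n)"
      by (simp add: sum_distrib_left)
    hence "F b z < 1 + e" using up elim(1) L by linarith
    moreover have "1 - e < F b z" using lower_pos[OF elim(3) b] elim(2) by linarith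
    ultimately show ?case by (simp add: dist_real_def abs_less_iff)
  qed
qed

lemma exp_neg_lim: "((\<lambda>z::real. exp (- z)) \<longlongrightarrow> 0) at_top"
  by (intro filterlim_compose[OF exp_at_bot] filterlim_uminus_at_bot_at_top)

lemma lim_neg:
  assumes b: "b < 0"
  shows "(F b \<longlongrightarrow> 1) at_top"
proof (rule tendsto_sandwich)
  define j where "j = Suc (nat \<lceil>- b\<rceil>)"
  have j: "j \<ge> 1" "- b \<le> real j" unfolding j_def by auto linarith
  show "\<forall>\<^sub>F z in at_top. (1 - b) * (1 - exp (- z)) + b * F 1 z \<le> F b z"
    using eventually_gt_at_top[of 0] by eventually_elim (rule lower_neg[OF _ b])
  show "\<forall>\<^sub>F z in at_top. F b z \<le> (1 + b / real j) + (- b / real j) * (1 + real j / z) ^ j"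
    using eventually_gt_at_top[of 0] by eventually_elim (rule upper_neg[OF _ b j])
  have "((\<lambda>z. (1 - b) * (1 - exp (- z)) + b * F 1 z) \<longlongrightarrow> (1 - b) * (1 - 0) + b * 1) at_top"
    by (intro tendsto_intros exp_neg_lim lim_pos) auto
  thus "((\<lambda>z. (1 - b) * (1 - exp (- z)) + b * F 1 z) \<longlongrightarrow> 1) at_top" by simp
  have "((\<lambda>z::real. (1 + b / real j) + (- b / real j) * (1 + real j / z) ^ j) \<longlongrightarrow>
      (1 + b / real j) + (- b / real j) * (1 + 0) ^ j) at_top"
    by (intro tendsto_intros tendsto_divide_0[OF tendsto_const]
        filterlim_at_top_imp_at_infinity[OF filterlim_ident])
  thus "((\<lambda>z::real. (1 + b / real j) + (- b / real j) * (1 + real j / z) ^ j) \<longlongrightarrow> 1) at_top"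
    by simp
qed

theorem mainTheorem11:
  shows "(\<forall>b::real. (F b \<longlongrightarrow> 1) at_top) \<and>
         (\<forall>b::real. b \<ge> -1 \<longrightarrow> bdd_above (F b ` {0..}))"
proof (intro conjI allI impI)
  fix b :: real
  show "(F b \<longlongrightarrow> 1) at_top"
    by (cases "b \<ge> 0") (auto intro: lim_pos lim_neg)
next
  fix b :: real assume b: "b \<ge> -1"
  define j where "j = Suc (nat \<lceil>b\<rceil>)"
  define M where "M = max 1 ((1 + real j) powr b)"
  show "bdd_above (F b ` {0..})"
  proof (rule bdd_aboveI2)
    fix z :: real assume "z \<in> {0..}"
    hence z: "z \<ge> 0" by simp
    show "F b z \<le> M"
    proof (cases "z = 0")
      case True thus ?thesis by (simp add: F_def M_def)
    next
      case False
      hence z: "z > 0" using z by simp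
      show ?thesis
      proof (cases "b \<ge> 0")
        case True
        have j: "j \<ge> 1" "b \<le> real j" unfolding j_def using True by auto linarith
        have "F b z \<le> exp (- z) * z powr b * (\<Sum>n<0. q z n) + (1 + real j / real (Suc 0)) powr b"
          by (rule upper_pos[OF z True j])
        thus ?thesis by (simp add: M_def)
      next
        case False
        thus ?thesis using bounded_neg[OF z _ b] by (simp add: M_def)
      qed
    qed
  qed
qed

end
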